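(* Let $a,b\in\mathbb{Q}$ be such that $g(x)=x^4+ax^2+b$ is irreducible over $\mathbb{Q}$, and let $\theta$ be a root of $g(x)$. Then for every $r\in\mathbb{Q}\setminus\mathbb{Q}^2$, we have $r\in\mathbb{Q}(\theta)^2$ if and only if at least one of $r(a^2-4b)$, $r(-a+2\sqrt{b})$, $r(-a-2\sqrt{b})$ lies in $\mathbb{Q}^2$.
   Context: For a field $K$, $K^2$ denotes the set of squares in $K$; $\mathbb{Q}^2$ is the set of rational squares. $\sqrt{b}$ denotes a fixed complex square root of $b$. *)

theory Defs
  imports Complex_Main "HOL-Computational_Algebra.Polynomial"
begin

definition gen_field :: "complex \<Rightarrow> complex set" where
  "gen_field \<theta> = \<Inter> {K. 0 \<in> K \<and> 1 \<in> K \<and> \<theta> \<in> K \<and>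
      (\<forall>x\<in>K. \<forall>y\<in>K. x + y \<in> K \<and> x * y \<in> K) \<and>
      (\<forall>x\<in>K. - x \<in> K) \<and> (\<forall>x\<in>K. x \<noteq> 0 \<longrightarrow> inverse x \<in> K)}"

definition squares_in :: "complex set \<Rightarrow> complex set" where
  "squares_in K = {y ^ 2 | y. y \<in> K}"

definition rat_squares :: "complex set" where
  "rat_squares = {of_rat q ^ 2 | q. True}"

end

theory Submission imports Defs "HOL-Computational_Algebra.Computational_Algebra" "HOL-Computational_Algebra.Field_as_Ring" begin

lemma mp_add: "map_poly (of_rat::rat\<Rightarrow>complex) (p + q) = map_poly of_rat p + map_poly of_rat q"
  by (intro poly_eqI) (simp add: coeff_map_poly of_rat_add)

lemma mp_mult: "map_poly (of_rat::rat\<Rightarrow>complex) (p * q) = map_poly of_rat p * map_poly of_rat q"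
  by (intro poly_eqI) (simp add: coeff_map_poly coeff_mult of_rat_sum of_rat_mult)

lemma lin_indep:
  fixes a b p0 p1 p2 p3 :: rat and \<theta> :: complex
  assumes irr: "irreducible [:b, 0, a, 0, 1:]"
    and root: "poly (map_poly of_rat [:b, 0, a, 0, 1:]) \<theta> = 0"
    and eq: "of_rat p0 + of_rat p1*\<theta> + of_rat p2*\<theta>^2 + of_rat p3*\<theta>^3 = 0"
  shows "p0 = 0 \<and> p1 = 0 \<and> p2 = 0 \<and> p3 = 0"
proof (rule ccontr)
  assume nz: "\<not> ?thesis"
  define P where "P = [:p0,p1,p2,p3:]"
  define g where "g = [:b, 0, a, 0, 1:]"
  have P0: "P \<noteq> 0" using nz by (auto simp: P_def)
  have "poly (map_poly of_rat P) \<theta> = of_rat p0 + of_rat p1*\<theta> + of_rat p2*\<theta>^2 + of_rat p3*\<theta>^3"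
    by (simp add: P_def map_poly_pCons) (simp add: power2_eq_square power3_eq_cube ring_distribs mult.assoc)
  then have Pr: "poly (map_poly of_rat P) \<theta> = 0" using eq by simp
  have dP: "degree P \<le> 3" unfolding P_def
    by (intro degree_le) (auto simp: coeff_pCons split: nat.splits)
  have dg: "degree g = 4" by (simp add: g_def)
  have cop: "coprime g P"
  proof -
    obtain k where gk: "g = gcd g P * k" by (meson gcd_dvd1 dvdE)
    from irreducibleD[OF irr[folded g_def] gk] show ?thesis
    proof
      assume "gcd g P dvd 1" thus ?thesis using is_unit_gcd by blast
    next
      assume "k dvd 1"
      then have "g dvd gcd g P" using gk by (metis dvd_mult_unit_iff dvd_refl)
      then have "g dvd P" using gcd_dvd2 dvd_trans by blast
      then have "degree g \<le> degree P" using P0 by (rule dvd_imp_degree_le)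
      with dP dg show ?thesis by simp
    qed
  qed
  have "fst (bezout_coefficients g P) * g + snd (bezout_coefficients g P) * P = 1"
    using bezout_coefficients_fst_snd[of g P] cop by simp
  then have "poly (map_poly of_rat (fst (bezout_coefficients g P) * g + snd (bezout_coefficients g P) * P)) \<theta> = 1"
    by simp
  moreover have "poly (map_poly of_rat g) \<theta> = 0" using root by (simp add: g_def)
  ultimately show False using Pr by (simp only: mp_add mp_mult poly_add poly_mult) simp
qed

lemma ident_z: "((\<theta>::complex)^2 + z)^2 - \<theta>^2*(- c + 2*z) = (\<theta>^4 + c*\<theta>^2 + d) + (z^2 - d)"
  by algebra

definition Tset :: "complex \<Rightarrow> complex set" where
  "Tset \<theta> = {of_rat p0 + of_rat p2*\<theta>^2 + (of_rat p1 + of_rat p3*\<theta>^2)*\<theta> | p0 p1 p2 p3. True}"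

context
  fixes a b :: rat and \<theta> :: complex
  assumes irr: "irreducible [:b, 0, a, 0, 1:]"
    and root: "poly (map_poly of_rat [:b, 0, a, 0, 1:]) \<theta> = 0"
begin

lemma rel: "\<theta>^4 + of_rat a * \<theta>^2 + of_rat b = 0"
proof -
  have "poly (map_poly of_rat [:b, 0, a, 0, 1:]) \<theta> = \<theta>^4 + of_rat a * \<theta>^2 + of_rat b"
    by (simp add: map_poly_pCons) (simp add: algebra_simps power2_eq_square power4_eq_xxxx)
  with root show ?thesis by simp
qed

lemmas LI = lin_indep[OF irr root]

lemma theta_nz: "\<theta> \<noteq> 0"
proof
  assume "\<theta> = 0"
  then have "of_rat 0 + of_rat 1*\<theta> + of_rat 0*\<theta>^2 + of_rat 0*\<theta>^3 = (0::complex)" by simp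
  from LI[OF this] show False by simp
qed

lemma LI2: "of_rat x + of_rat y * \<theta>^2 = 0 \<Longrightarrow> x = 0 \<and> y = 0"
  using LI[of x 0 y 0] by simp

lemma dsq: "(2*\<theta>^2 + of_rat a)^2 = of_rat (a^2 - 4*b)"
  using rel by (simp add: of_rat_diff of_rat_mult of_rat_power) algebra

lemma d_nz: "a^2 - 4*b \<noteq> 0"
proof
  assume "a^2 - 4*b = 0"
  then have "(2*\<theta>^2 + of_rat a)^2 = 0" using dsq by simp
  then have "of_rat a + of_rat 2 * \<theta>^2 = 0" by (simp add: add.commute)
  from LI2[OF this] show False by simp
qed

lemma T_mult:
  assumes "x \<in> Tset \<theta>" "y \<in> Tset \<theta>" shows "x * y \<in> Tset \<theta>"
proof -
  obtain A C B D where x: "x = of_rat A + of_rat B*\<theta>^2 + (of_rat C + of_rat D*\<theta>^2)*\<theta>"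
    using assms(1) unfolding Tset_def by blast
  obtain A' C' B' D' where y: "y = of_rat A' + of_rat B'*\<theta>^2 + (of_rat C' + of_rat D'*\<theta>^2)*\<theta>"
    using assms(2) unfolding Tset_def by blast
  define E where "E = C*C' - b*D*D'"
  define F where "F = C*D' + C'*D - a*D*D'"
  define p0 where "p0 = A*A' - b*B*B' - b*F"
  define p2 where "p2 = A*B' + A'*B - a*B*B' + E - a*F"
  define p1 where "p1 = A*C' - b*B*D' + C*A' - b*D*B'"
  define p3 where "p3 = A*D' + B*C' - a*B*D' + C*B' + D*A' - a*D*B'"
  have "x * y = of_rat p0 + of_rat p2*\<theta>^2 + (of_rat p1 + of_rat p3*\<theta>^2)*\<theta>"
    unfolding x y p0_def p1_def p2_def p3_def E_def F_def using rel
    by (simp only: of_rat_add of_rat_diff of_rat_mult of_rat_numeral_eq) algebra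
  then show ?thesis unfolding Tset_def by blast
qed

lemma S_inv:
  assumes nz: "of_rat A + of_rat B*\<theta>^2 \<noteq> 0"
  shows "\<exists>A' B'. inverse (of_rat A + of_rat B*\<theta>^2) = of_rat A' + of_rat B'*\<theta>^2"
proof -
  define N where "N = A^2 - a*A*B + b*B^2"
  have key: "(of_rat A + of_rat B*\<theta>^2) * (of_rat (A - a*B) + of_rat (-B) * \<theta>^2) = of_rat N"
    unfolding N_def using rel by (simp only: of_rat_add of_rat_diff of_rat_mult of_rat_minus of_rat_power of_rat_numeral_eq) algebra
  have N0: "N \<noteq> 0"
  proof
    assume "N = 0"
    with key nz have "of_rat (A - a*B) + of_rat (-B) * \<theta>^2 = 0" by simp
    from LI2[OF this] have "A = 0" "B = 0" by auto
    with nz show False by simp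
  qed
  have "inverse (of_rat A + of_rat B*\<theta>^2) = of_rat ((A - a*B)/N) + of_rat (-B/N)*\<theta>^2"
  proof -
    have "inverse (of_rat A + of_rat B*\<theta>^2) = (of_rat (A - a*B) + of_rat (-B) * \<theta>^2) / of_rat N"
      using key nz N0 by (simp add: field_simps)
    also have "\<dots> = of_rat ((A - a*B)/N) + of_rat (-B/N)*\<theta>^2"
      by (simp only: of_rat_divide of_rat_minus) (simp add: add_divide_distrib diff_divide_distrib)
    finally show ?thesis .
  qed
  then show ?thesis by blast
qed

lemma T_inv:
  assumes "x \<in> Tset \<theta>" "x \<noteq> 0" shows "inverse x \<in> Tset \<theta>"
proof -
  obtain A C B D where x: "x = of_rat A + of_rat B*\<theta>^2 + (of_rat C + of_rat D*\<theta>^2)*\<theta>"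
    using assms(1) unfolding Tset_def by blast
  define w where "w = of_rat A + of_rat B*\<theta>^2 + (of_rat (-C) + of_rat (-D)*\<theta>^2)*\<theta>"
  have wT: "w \<in> Tset \<theta>" unfolding w_def Tset_def by blast
  have w0: "w \<noteq> 0"
  proof
    assume "w = 0"
    then have "of_rat A + of_rat (-C)*\<theta> + of_rat B*\<theta>^2 + of_rat (-D)*\<theta>^3 = 0"
      unfolding w_def by (simp add: algebra_simps power2_eq_square power3_eq_cube)
    from LI[OF this] have "A = 0" "B = 0" "C = 0" "D = 0" by auto
    with assms(2) x show False by simp
  qed
  define E where "E = C^2 - b*D^2"
  define F where "F = 2*C*D - a*D^2"
  define G where "G = A^2 - b*B^2 + b*F"
  define H where "H = 2*A*B - a*B^2 - E + a*F"
  have m: "x * w = of_rat G + of_rat H * \<theta>^2"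
    unfolding x w_def G_def H_def E_def F_def using rel
    by (simp only: of_rat_add of_rat_diff of_rat_mult of_rat_minus of_rat_power of_rat_numeral_eq) algebra
  have "x * w \<noteq> 0" using w0 assms(2) by simp
  with m obtain A' B' where i: "inverse (x*w) = of_rat A' + of_rat B'*\<theta>^2"
    using S_inv by metis
  have iT: "inverse (x*w) \<in> Tset \<theta>" unfolding i Tset_def
    by (rule CollectI, rule exI[of _ A'], rule exI[of _ 0], rule exI[of _ B'], rule exI[of _ 0]) simp
  have "inverse x = w * inverse (x*w)" using w0 assms(2) by (simp add: field_simps)
  then show ?thesis using T_mult[OF wT iT] by metis
qed

lemma gen_sub: "gen_field \<theta> \<subseteq> Tset \<theta>"
proof -
  have "Tset \<theta> \<in> {K. 0 \<in> K \<and> 1 \<in> K \<and> \<theta> \<in> K \<and>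
      (\<forall>x\<in>K. \<forall>y\<in>K. x + y \<in> K \<and> x * y \<in> K) \<and>
      (\<forall>x\<in>K. - x \<in> K) \<and> (\<forall>x\<in>K. x \<noteq> 0 \<longrightarrow> inverse x \<in> K)}"
  proof (intro CollectI conjI ballI impI)
    show "0 \<in> Tset \<theta>" unfolding Tset_def
      by (rule CollectI, rule exI[of _ 0], rule exI[of _ 0], rule exI[of _ 0], rule exI[of _ 0]) simp
    show "1 \<in> Tset \<theta>" unfolding Tset_def
      by (rule CollectI, rule exI[of _ 1], rule exI[of _ 0], rule exI[of _ 0], rule exI[of _ 0]) simp
    show "\<theta> \<in> Tset \<theta>" unfolding Tset_def
      by (rule CollectI, rule exI[of _ 0], rule exI[of _ 1], rule exI[of _ 0], rule exI[of _ 0]) simp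
  next
    fix x y assume "x \<in> Tset \<theta>" "y \<in> Tset \<theta>"
    then show "x * y \<in> Tset \<theta>" by (rule T_mult)
  next
    fix x y assume "x \<in> Tset \<theta>" "y \<in> Tset \<theta>"
    then obtain A C B D A' C' B' D' where
      "x = of_rat A + of_rat B*\<theta>^2 + (of_rat C + of_rat D*\<theta>^2)*\<theta>"
      "y = of_rat A' + of_rat B'*\<theta>^2 + (of_rat C' + of_rat D'*\<theta>^2)*\<theta>"
      unfolding Tset_def by blast
    then have "x + y = of_rat (A+A') + of_rat (B+B')*\<theta>^2 + (of_rat (C+C') + of_rat (D+D')*\<theta>^2)*\<theta>"
      by (simp add: of_rat_add algebra_simps)
    then show "x + y \<in> Tset \<theta>" unfolding Tset_def by blast
  next
    fix x assume "x \<in> Tset \<theta>"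
    then obtain A C B D where
      "x = of_rat A + of_rat B*\<theta>^2 + (of_rat C + of_rat D*\<theta>^2)*\<theta>"
      unfolding Tset_def by blast
    then have "- x = of_rat (-A) + of_rat (-B)*\<theta>^2 + (of_rat (-C) + of_rat (-D)*\<theta>^2)*\<theta>"
      by (simp add: of_rat_minus algebra_simps)
    then show "- x \<in> Tset \<theta>" unfolding Tset_def by blast
  next
    fix x assume "x \<in> Tset \<theta>" "x \<noteq> 0"
    then show "inverse x \<in> Tset \<theta>" by (rule T_inv)
  qed
  then show ?thesis unfolding gen_field_def by (rule Inter_lower)
qed


end

lemma fld_rat:
  assumes "0 \<in> K" "1 \<in> K" "\<forall>x\<in>K. \<forall>y\<in>K. x + y \<in> K \<and> x * y \<in> K"
    "\<forall>x\<in>K. - x \<in> K" "\<forall>x\<in>K. x \<noteq> 0 \<longrightarrow> inverse x \<in> K"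
  shows "(of_rat q :: complex) \<in> K"
proof -
  have nat: "(of_nat n :: complex) \<in> K" for n
    by (induction n) (use assms in \<open>auto simp: of_nat_Suc\<close>)
  have int: "(of_int i :: complex) \<in> K" for i
  proof (cases i rule: int_cases)
    case (nonneg n) then show ?thesis using nat by simp
  next
    case (neg n) then show ?thesis using nat[of "Suc n"] assms(4) by (simp del: of_nat_Suc)
  qed
  obtain n d where q: "q = Rat.Fract n d" "d > 0" by (cases q) auto
  have "(of_rat q :: complex) = of_int n * inverse (of_int d)"
    using q by (simp add: Fract_of_int_quotient divide_inverse of_rat_mult of_rat_inverse)
  moreover have "inverse (of_int d :: complex) \<in> K" using int[of d] assms(5) q(2) by simp
  ultimately show ?thesis using int[of n] assms(3) by simp
qed

lemma gf_rat: "(of_rat q :: complex) \<in> gen_field \<theta>"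
  unfolding gen_field_def using fld_rat by blast

lemma gf_theta: "\<theta> \<in> gen_field \<theta>"
  unfolding gen_field_def by blast

lemma gf_add: "x \<in> gen_field \<theta> \<Longrightarrow> y \<in> gen_field \<theta> \<Longrightarrow> x + y \<in> gen_field \<theta>"
  unfolding gen_field_def by blast

lemma gf_mult: "x \<in> gen_field \<theta> \<Longrightarrow> y \<in> gen_field \<theta> \<Longrightarrow> x * y \<in> gen_field \<theta>"
  unfolding gen_field_def by blast

lemma gf_inv: "x \<in> gen_field \<theta> \<Longrightarrow> inverse x \<in> gen_field \<theta>"
  unfolding gen_field_def by (cases "x = 0") auto

context
  fixes a b :: rat and \<theta> :: complex
  assumes irr: "irreducible [:b, 0, a, 0, 1:]"
    and root: "poly (map_poly of_rat [:b, 0, a, 0, 1:]) \<theta> = 0"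
begin

lemma case_z:
  fixes z :: complex
  assumes z: "z^2 = of_rat b" and eq: "of_rat r * (- of_rat a + 2*z) = of_rat s ^ 2" and r0: "r \<noteq> 0"
  shows "of_rat r \<in> squares_in (gen_field \<theta>)"
proof -
  define M where "M = - of_rat a + 2*z"
  have r0c: "(of_rat r::complex) \<noteq> 0" using r0 by simp
  have eqM: "of_rat r * M = of_rat s ^ 2" using eq unfolding M_def .
  have e1: "M = of_rat s ^ 2 / of_rat r" using eqM r0c by (simp add: eq_divide_eq mult.commute)
  have "z = (M + of_rat a) / 2" unfolding M_def by simp
  also have "\<dots> = of_rat ((s^2/r + a)/2)" unfolding e1 by (simp add: of_rat_divide of_rat_add of_rat_power)
  finally have "z = of_rat ((s^2/r + a)/2)" .
  then have zK: "z \<in> gen_field \<theta>" using gf_rat by simp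
  have M0: "M \<noteq> 0"
  proof
    assume "M = 0"
    then have "z = of_rat a / 2" unfolding M_def by (simp add: mult.commute)
    then have za: "z = of_rat a / 2" .
    have "(of_rat (a^2 - 4*b) :: complex) = of_rat a ^ 2 - 4 * z^2"
      using z by (simp add: of_rat_diff of_rat_mult of_rat_power)
    also have "\<dots> = 0" unfolding za by (simp add: power_divide)
    finally have "(of_rat (a^2 - 4*b) :: complex) = 0" .
    then show False using d_nz[OF irr root] by simp
  qed
  define w where "w = \<theta> + z * inverse \<theta>"
  have wK: "w \<in> gen_field \<theta>" unfolding w_def
    by (intro gf_add gf_mult gf_inv gf_theta zK)
  have t0: "\<theta> \<noteq> 0" by (rule theta_nz[OF irr root])
  have tw: "\<theta> * w = \<theta>^2 + z" using t0 unfolding w_def by (simp add: distrib_left power2_eq_square)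
  have "(\<theta>^2 + z)^2 - \<theta>^2*(- of_rat a + 2*z) = (\<theta>^4 + of_rat a*\<theta>^2 + of_rat b) + (z^2 - of_rat b)"
    by (rule ident_z)
  also have "\<dots> = 0" using rel[OF irr root] z by simp
  finally have "(\<theta> * w)^2 = \<theta>^2 * M" unfolding tw M_def by simp
  then have "\<theta>^2 * w^2 = \<theta>^2 * M" by (simp add: power_mult_distrib)
  then have wM: "w^2 = M" using t0 by simp
  then have w0: "w \<noteq> 0" using M0 by auto
  define y where "y = of_rat s * inverse w"
  have yK: "y \<in> gen_field \<theta>" unfolding y_def by (intro gf_mult gf_inv gf_rat wK)
  have "y^2 = of_rat s ^ 2 / M" unfolding y_def power_mult_distrib power_inverse wM by (simp add: divide_inverse)
  also have "\<dots> = of_rat r" unfolding eqM[symmetric] using M0 by simp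
  finally have "of_rat r = y^2" by simp
  then show ?thesis unfolding squares_in_def using yK by blast
qed

lemma case_d:
  assumes eq: "of_rat (r * (a^2 - 4*b)) = (of_rat s ^ 2 :: complex)"
  shows "of_rat r \<in> squares_in (gen_field \<theta>)"
proof -
  define w where "w = 2*\<theta>^2 + of_rat a"
  have wK: "w \<in> gen_field \<theta>" unfolding w_def power2_eq_square
    by (intro gf_add gf_mult gf_theta gf_rat[of 2, simplified] gf_rat)
  have wd: "w^2 = of_rat (a^2 - 4*b)" unfolding w_def by (rule dsq[OF irr root])
  have d0: "(of_rat (a^2 - 4*b) :: complex) \<noteq> 0" using d_nz[OF irr root] by simp
  then have w0: "w \<noteq> 0" using wd by auto
  define y where "y = of_rat s * inverse w"
  have yK: "y \<in> gen_field \<theta>" unfolding y_def by (intro gf_mult gf_inv gf_rat wK)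
  have "y^2 = of_rat s ^ 2 / of_rat (a^2 - 4*b)" unfolding y_def using wd by (simp add: power_mult_distrib field_simps)
  also have "\<dots> = of_rat r"
  proof -
    have eq': "of_rat r * of_rat (a^2 - 4*b) = (of_rat s ^ 2 :: complex)" using eq by (simp only: of_rat_mult)
    show ?thesis using d0 by (simp add: eq'[symmetric])
  qed
  finally have "of_rat r = y^2" by simp
  then show ?thesis unfolding squares_in_def using yK by blast
qed


lemma forward:
  assumes yT: "y \<in> Tset \<theta>" and y2: "y^2 = of_rat r" and nsq: "of_rat r \<notin> rat_squares"
  shows "of_rat (r * (a ^ 2 - 4 * b)) \<in> rat_squares \<or>
     of_rat r * (- of_rat a + 2 * csqrt (of_rat b)) \<in> rat_squares \<or>
     of_rat r * (- of_rat a - 2 * csqrt (of_rat b)) \<in> rat_squares"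
proof -
  obtain A C B D where y: "y = of_rat A + of_rat B*\<theta>^2 + (of_rat C + of_rat D*\<theta>^2)*\<theta>"
    using yT unfolding Tset_def by blast
  define E where "E = C^2 - b*D^2"
  define F where "F = 2*C*D - a*D^2"
  define G where "G = A^2 - b*B^2 - b*F"
  define H where "H = 2*A*B - a*B^2 + E - a*F"
  define P where "P = A*C - b*B*D"
  define Q where "Q = A*D + B*C - a*B*D"
  have ex: "y^2 = of_rat G + of_rat (2*P)*\<theta> + of_rat H*\<theta>^2 + of_rat (2*Q)*\<theta>^3"
    using rel[OF irr root] unfolding y G_def H_def P_def Q_def E_def F_def
    by (simp only: of_rat_add of_rat_diff of_rat_mult of_rat_power of_rat_numeral_eq) algebra
  have "of_rat (G - r) + of_rat (2*P)*\<theta> + of_rat H*\<theta>^2 + of_rat (2*Q)*\<theta>^3 = 0"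
    using ex y2 by (simp add: of_rat_diff)
  from LI[OF irr root this] have G: "G = r" and H: "H = 0" and P: "P = 0" and Q: "Q = 0" by auto
  have "(of_rat A + of_rat B*\<theta>^2) * (of_rat C + of_rat D*\<theta>^2) = of_rat P + of_rat Q*\<theta>^2"
    unfolding P_def Q_def using rel[OF irr root]
    by (simp only: of_rat_add of_rat_diff of_rat_mult of_rat_power of_rat_numeral_eq) algebra
  then have "(of_rat A + of_rat B*\<theta>^2) = 0 \<or> (of_rat C + of_rat D*\<theta>^2) = 0" using P Q by simp
  then show ?thesis
  proof
    assume "of_rat C + of_rat D*\<theta>^2 = 0"
    then have C: "C = 0" "D = 0" using LI2[OF irr root] by auto
    have r: "r = A^2 - b*B^2" and h: "2*A*B - a*B^2 = 0"
      using G H C unfolding G_def H_def E_def F_def by simp_all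
    have B0: "B \<noteq> 0"
    proof
      assume "B = 0" then have "of_rat r = (of_rat A::complex)^2" using r by (simp add: of_rat_power)
      with nsq show False unfolding rat_squares_def by blast
    qed
    have "B*(2*A - a*B) = 0" using h by (simp add: algebra_simps power2_eq_square)
    then have "2*A - a*B = 0" using B0 by simp
    then have A: "A = a*B/2" by simp
    have "r*(a^2-4*b) = (B*(a^2-4*b)/2)^2" unfolding r A by (simp add: field_simps power2_eq_square)
    then have "(of_rat (r*(a^2-4*b)) :: complex) = of_rat (B*(a^2-4*b)/2) ^ 2" by (simp add: of_rat_power)
    then show ?thesis unfolding rat_squares_def by blast
  next
    assume "of_rat A + of_rat B*\<theta>^2 = 0"
    then have AB: "A = 0" "B = 0" using LI2[OF irr root] by auto
    have r: "r = -b*(2*C*D - a*D^2)" and h: "C^2 - b*D^2 - a*(2*C*D - a*D^2) = 0"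
      using G H AB unfolding G_def H_def E_def F_def by simp_all
    have D0: "D \<noteq> 0"
    proof
      assume "D = 0"
      then have "C = 0" using h by simp
      with \<open>D = 0\<close> have "of_rat r = (of_rat 0::complex)^2" using r by simp
      with nsq show False unfolding rat_squares_def by blast
    qed
    define c0 where "c0 = (C - a*D)/D"
    have C: "C = (c0 + a)*D" using D0 by (simp add: c0_def field_simps)
    have "(C - a*D)^2 = b*D^2" using h by algebra
    then have bc: "b = c0^2" using D0 unfolding c0_def by (simp add: field_simps power2_eq_square)
    have rr: "r*(-a - 2*c0) = (c0*D*(a+2*c0))^2" using r C bc by algebra
    have "(csqrt (of_rat b))^2 = (of_rat c0 :: complex)^2" using bc by (simp add: of_rat_power)
    then have "csqrt (of_rat b) = of_rat c0 \<or> csqrt (of_rat b) = - of_rat c0"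
      using power2_eq_iff by blast
    then show ?thesis
    proof
      assume cs: "csqrt (of_rat b) = of_rat c0"
      have "of_rat r * (- of_rat a - 2 * csqrt (of_rat b)) = (of_rat (r*(-a-2*c0)) :: complex)"
        by (simp add: cs of_rat_mult of_rat_diff of_rat_minus)
      also have "\<dots> = of_rat (c0*D*(a+2*c0)) ^ 2" by (simp add: rr of_rat_power)
      finally show ?thesis unfolding rat_squares_def by blast
    next
      assume cs: "csqrt (of_rat b) = - of_rat c0"
      have "of_rat r * (- of_rat a + 2 * csqrt (of_rat b)) = (of_rat (r*(-a-2*c0)) :: complex)"
        by (simp add: cs of_rat_mult of_rat_diff of_rat_minus)
      also have "\<dots> = of_rat (c0*D*(a+2*c0)) ^ 2" by (simp add: rr of_rat_power)
      finally show ?thesis unfolding rat_squares_def by blast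
    qed
  qed
qed

end

theorem lemma3p2:
  fixes a b r :: rat and \<theta> :: complex
  assumes irr: "irreducible [:b, 0, a, 0, 1:]"
    and root: "poly (map_poly of_rat [:b, 0, a, 0, 1:]) \<theta> = 0"
    and nsq: "of_rat r \<notin> rat_squares"
  shows "of_rat r \<in> squares_in (gen_field \<theta>) \<longleftrightarrow>
    (of_rat (r * (a ^ 2 - 4 * b)) \<in> rat_squares \<or>
     of_rat r * (- of_rat a + 2 * csqrt (of_rat b)) \<in> rat_squares \<or>
     of_rat r * (- of_rat a - 2 * csqrt (of_rat b)) \<in> rat_squares)"
proof -
  have r0: "r \<noteq> 0"
  proof
    assume "r = 0"
    then have "of_rat r = (of_rat 0 :: complex) ^ 2" by simp
    with nsq show False unfolding rat_squares_def by blast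
  qed
  show ?thesis
  proof
    assume "of_rat r \<in> squares_in (gen_field \<theta>)"
    show "of_rat (r * (a ^ 2 - 4 * b)) \<in> rat_squares \<or>
     of_rat r * (- of_rat a + 2 * csqrt (of_rat b)) \<in> rat_squares \<or>
     of_rat r * (- of_rat a - 2 * csqrt (of_rat b)) \<in> rat_squares"
    proof -
      from \<open>of_rat r \<in> squares_in (gen_field \<theta>)\<close> obtain y where
        y: "of_rat r = y^2" "y \<in> gen_field \<theta>" unfolding squares_in_def by blast
      then have yT: "y \<in> Tset \<theta>" using gen_sub[OF irr root] by blast
      show ?thesis using forward[OF irr root yT y(1)[symmetric] nsq] .
    qed
  next
    assume "of_rat (r * (a ^ 2 - 4 * b)) \<in> rat_squares \<or>
     of_rat r * (- of_rat a + 2 * csqrt (of_rat b)) \<in> rat_squares \<or>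
     of_rat r * (- of_rat a - 2 * csqrt (of_rat b)) \<in> rat_squares"
    then show "of_rat r \<in> squares_in (gen_field \<theta>)"
    proof (elim disjE)
      assume "of_rat (r * (a ^ 2 - 4 * b)) \<in> rat_squares"
      then obtain s where "of_rat (r * (a ^ 2 - 4 * b)) = (of_rat s ^ 2 :: complex)"
        unfolding rat_squares_def by blast
      then show ?thesis by (rule case_d[OF irr root])
    next
      assume "of_rat r * (- of_rat a + 2 * csqrt (of_rat b)) \<in> rat_squares"
      then obtain s where "of_rat r * (- of_rat a + 2 * csqrt (of_rat b)) = of_rat s ^ 2"
        unfolding rat_squares_def by blast
      then show ?thesis using case_z[OF irr root, of "csqrt (of_rat b)"] r0 by simp
    next
      assume "of_rat r * (- of_rat a - 2 * csqrt (of_rat b)) \<in> rat_squares"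
      then obtain s where "of_rat r * (- of_rat a + 2 * (- csqrt (of_rat b))) = of_rat s ^ 2"
        unfolding rat_squares_def by auto
      then show ?thesis using case_z[OF irr root, of "- csqrt (of_rat b)"] r0 by simp
    qed
  qed
qed

end
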